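(* For every $n\ge-1$, the polygraph freely generating $\mathcal O_n$ is atomic: for every $m$-generator $x$ of it and every $0\le i<m$, the supports of $[s_i(x)]$ and $[t_i(x)]$ in $\lambda(\mathcal O_n)_i$ are disjoint.
   Context: All $\omega$-categories are strict and globular; $s_i(x),t_i(x)$ are iterated $i$-sources/targets. A polygraph $S$ consists of sets $S_n$ of $n$-generators with source/target maps from $S_{n+1}$ to $n$-cells of the free $n$-category on $S_0,\dots,S_n$; $S^*$ is the free $\omega$-category. An expansion on an $\omega$-category $C$ consists of a $0$-cell $o$ and, for each $k$-cell $x$, a $(k+1)$-cell $\xi_x$ with $\xi_x:o\to x$ if $k=0$ and $\xi_x:\xi_{t(x)}\to x\star_0\xi_{s_0(x)}\star_1\cdots\star_{k-1}\xi_{s_{k-1}(x)}$ if $k>0$ (composites bracketed giving priority to lowest-dimensional composition), satisfying $\xi_{y\star_p x}=t_{p+1}(y)\star_0\xi_{s_0(x)}\star_1\cdots\star_{p-1}\xi_{s_{p-1}(x)}\star_p\xi_x\star_{p+1}\xi_y$, $\xi_{1_u}=1_{\xi_u}$, $\xi_{\xi_u}=1_{\xi_u}$, $\xi_o=1_o$. $T=UF$ is the monad induced by the forgetful functor $U$ from $\omega$-categories with expansion to $\omega\mathbf{Cat}$ and its left adjoint $F$, with unit $\eta$. For a polygraph $S$, $T(S^* )$ is freely generated by the polygraph whose $n$-generators are $\eta(a)$ ($a\in S_n$), together with the origin $o$ if $n=0$ and $\xi_{\eta(a)}$ ($a\in S_{n-1}$) if $n\ge1$. $\mathcal O_n=T^{n+1}(\emptyset)$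 ($\mathcal O_{-1}=\emptyset$), and its generating polygraph is obtained by iterating this construction $n+1$ times from the empty polygraph. For a polygraph $S$, $\lambda(S^* )_k$ is the free abelian group on $k$-cells of $S^*$ modulo $x\star_j y-x-y$; it is free abelian on the classes $[x]$ of $k$-generators; the support of an element is the set of generators with nonzero coefficient. A polygraph is atomic if for every $m$-generator $x$ and $0\le i<m$, the supports of $[s_i(x)]$ and $[t_i(x)]$ are disjoint. *)

theory Defs
  imports Main
begin

text \<open>Generators of the polygraph generating T(S*) are o, eta(a), xi_eta(a) for a a
generator of S.  Since the generating polygraph of O_n is obtained by iterating this
construction from the empty polygraph, all its generators are values of the following
datatype.\<close>

datatype gen = Orig | Eta gen | XiEta gen

fun gdim :: "gen \<Rightarrow> nat" where
  "gdim Orig = 0"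
| "gdim (Eta a) = gdim a"
| "gdim (XiEta a) = Suc (gdim a)"

text \<open>A composite whose
operands have different dimensions denotes the whiskered composite, the lower-dimensional
operand being promoted by identities.  Comp p y x denotes y \<star>_p x (so its p-source is
the p-source of x).  Every cell of S* is denoted by such a term; all functions below
(iterated sources/targets, expansion, abelian class) are compatible with the
omega-category axioms, so they are well defined on cells.\<close>

datatype 'g tm = Gen 'g | Id "'g tm" | Comp nat "'g tm" "'g tm"

fun tdim :: "gen tm \<Rightarrow> nat" where
  "tdim (Gen g) = gdim g"
| "tdim (Id u) = Suc (tdim u)"
| "tdim (Comp p y x) = max (tdim y) (tdim x)"

text \<open>Iterated i-source / i-target, given the source (resp. target) of each generator.
The first argument is a fuel bound (the dimension of the term suffices).\<close>

fun srcF :: "(gen \<Rightarrow> gen tm) \<Rightarrow> nat \<Rightarrow> nat \<Rightarrow> gen tm \<Rightarrow> gen tm" where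
  "srcF gs 0 i t = t"
| "srcF gs (Suc n) i (Gen g) =
     (if gdim g \<le> i then Gen g else srcF gs n i (gs g))"
| "srcF gs (Suc n) i (Id u) =
     (if tdim (Id u) \<le> i then Id u else srcF gs (Suc n) i u)"
| "srcF gs (Suc n) i (Comp p y x) =
     (if tdim (Comp p y x) \<le> i then Comp p y x
      else if i \<le> p then srcF gs (Suc n) i x
      else Comp p (srcF gs (Suc n) i y) (srcF gs (Suc n) i x))"

fun tgtF :: "(gen \<Rightarrow> gen tm) \<Rightarrow> nat \<Rightarrow> nat \<Rightarrow> gen tm \<Rightarrow> gen tm" where
  "tgtF gt 0 i t = t"
| "tgtF gt (Suc n) i (Gen g) =
     (if gdim g \<le> i then Gen g else tgtF gt n i (gt g))"
| "tgtF gt (Suc n) i (Id u) =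
     (if tdim (Id u) \<le> i then Id u else tgtF gt (Suc n) i u)"
| "tgtF gt (Suc n) i (Comp p y x) =
     (if tdim (Comp p y x) \<le> i then Comp p y x
      else if i \<le> p then tgtF gt (Suc n) i y
      else Comp p (tgtF gt (Suc n) i y) (tgtF gt (Suc n) i x))"

definition src :: "(gen \<Rightarrow> gen tm) \<Rightarrow> nat \<Rightarrow> gen tm \<Rightarrow> gen tm" where
  "src gs i t = srcF gs (tdim t) i t"

definition tgt :: "(gen \<Rightarrow> gen tm) \<Rightarrow> nat \<Rightarrow> gen tm \<Rightarrow> gen tm" where
  "tgt gt i t = tgtF gt (tdim t) i t"

abbreviation etaT :: "gen tm \<Rightarrow> gen tm" where
  "etaT \<equiv> map_tm Eta"

text \<open>The expansion xi of T(S*) evaluated at eta(u), for u a term of S*, computed from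
the expansion axioms:
 xi_{eta b} is the generator XiEta b, xi_{1_u} = 1_{xi_u}, and
 xi_{y \<star>_p x} = t_{p+1}(y) \<star>_0 xi_{s_0 x} \<star>_1 ... \<star>_{p-1} xi_{s_{p-1} x} \<star>_p xi_x \<star>_{p+1} xi_y
(bracketed giving priority to the lowest-dimensional composition, i.e. left-nested).
The natural number is a fuel bound (Suc of the dimension suffices).\<close>

fun xiS :: "(gen \<Rightarrow> gen tm) \<Rightarrow> (gen \<Rightarrow> gen tm) \<Rightarrow> nat \<Rightarrow> gen tm \<Rightarrow> gen tm" where
  "xiS gs gt 0 u = u"
| "xiS gs gt (Suc f) (Gen b) = Gen (XiEta b)"
| "xiS gs gt (Suc f) (Id u) = Id (xiS gs gt (Suc f) u)"
| "xiS gs gt (Suc f) (Comp p y x) =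
     Comp (Suc p)
       (Comp p
          (foldl (\<lambda>acc j. Comp j acc (xiS gs gt f (src gs j x)))
                 (etaT (tgt gt (Suc p) y)) [0..<p])
          (xiS gs gt (Suc f) x))
       (xiS gs gt (Suc f) y)"

definition xiT :: "(gen \<Rightarrow> gen tm) \<Rightarrow> (gen \<Rightarrow> gen tm) \<Rightarrow> gen tm \<Rightarrow> gen tm" where
  "xiT gs gt u = xiS gs gt (Suc (tdim u)) u"

text \<open>A polygraph: its set of generators (with dimension gdim), and the source and
target of each generator of positive dimension, as a term of the free category.\<close>

type_synonym polygraph = "gen set \<times> (gen \<Rightarrow> gen tm) \<times> (gen \<Rightarrow> gen tm)"

definition gens :: "polygraph \<Rightarrow> gen set" where "gens P = fst P"
definition gsrc :: "polygraph \<Rightarrow> gen \<Rightarrow> gen tm" where "gsrc P = fst (snd P)"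
definition gtgt :: "polygraph \<Rightarrow> gen \<Rightarrow> gen tm" where "gtgt P = snd (snd P)"

text \<open>Generating polygraph of T(S*):  n-generators eta(a) (a in S_n), o (n = 0) and
xi_{eta(a)} (a in S_{n-1}), with
 eta(a) : eta(s a) \<rightarrow> eta(t a),
 xi_{eta a} : o \<rightarrow> eta a  if a is a 0-generator,
 xi_{eta a} : xi_{t(eta a)} \<rightarrow> eta a \<star>_0 xi_{s_0(eta a)} \<star>_1 ... \<star>_{k-1} xi_{s_{k-1}(eta a)}
   if a is a k-generator, k > 0.\<close>

definition Tstep :: "polygraph \<Rightarrow> polygraph" where
  "Tstep P =
    (let G = gens P; gs = gsrc P; gt = gtgt P in
     (insert Orig (Eta ` G \<union> XiEta ` G),
      (\<lambda>g. case g of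
          Orig \<Rightarrow> undefined
        | Eta a \<Rightarrow> etaT (gs a)
        | XiEta a \<Rightarrow> (if gdim a = 0 then Gen Orig
                      else xiT gs gt (gt a))),
      (\<lambda>g. case g of
          Orig \<Rightarrow> undefined
        | Eta a \<Rightarrow> etaT (gt a)
        | XiEta a \<Rightarrow>
            foldl (\<lambda>acc j. Comp j acc (xiT gs gt (src gs j (Gen a))))
                  (Gen (Eta a)) [0..<gdim a])))"

definition empty_polygraph :: polygraph where
  "empty_polygraph = ({}, (\<lambda>_. undefined), (\<lambda>_. undefined))"

text \<open>Generating polygraph of O_n = T^{n+1}(\<emptyset>), for n \<ge> -1.\<close>

definition O_polygraph :: "int \<Rightarrow> polygraph" where
  "O_polygraph n = (Tstep ^^ nat (n + 1)) empty_polygraph"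

text \<open>Coefficients of the class [t] of a k-cell t in lambda(S*)_k, the free abelian group
on the k-generators: generators count 1, identities count 0, composites add.\<close>

fun cls :: "nat \<Rightarrow> gen tm \<Rightarrow> gen \<Rightarrow> int" where
  "cls k (Gen g) = (\<lambda>h. if gdim g = k \<and> h = g then 1 else 0)"
| "cls k (Id u) = (\<lambda>h. 0)"
| "cls k (Comp p y x) = (\<lambda>h. cls k y h + cls k x h)"

definition supp :: "(gen \<Rightarrow> int) \<Rightarrow> gen set" where
  "supp c = {g. c g \<noteq> 0}"

definition atomic :: "polygraph \<Rightarrow> bool" where
  "atomic P \<longleftrightarrow>
    (\<forall>x \<in> gens P. \<forall>i < gdim x.
       supp (cls i (src (gsrc P) i (Gen x))) \<inter> supp (cls i (tgt (gtgt P) i (Gen x))) = {})"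

end

theory Submission
  imports Defs
begin

fun tg :: "'g tm \<Rightarrow> 'g set" where
  "tg (Gen g) = {g}"
| "tg (tm.Id u) = tg u"
| "tg (Comp p y x) = tg y \<union> tg x"

fun occ :: "nat \<Rightarrow> gen tm \<Rightarrow> gen set" where
  "occ k (Gen g) = (if gdim g = k then {g} else {})"
| "occ k (tm.Id u) = {}"
| "occ k (Comp p y x) = occ k y \<union> occ k x"

fun wft :: "gen tm \<Rightarrow> bool" where
  "wft (Gen g) = True"
| "wft (tm.Id u) = wft u"
| "wft (Comp p y x) = (p < tdim y \<and> p < tdim x \<and> wft y \<and> wft x)"

definition wfp :: "gen set \<Rightarrow> (gen \<Rightarrow> gen tm) \<Rightarrow> bool" where
  "wfp G h \<longleftrightarrow> (\<forall>g\<in>G. 0 < gdim g \<longrightarrow> tdim (h g) = gdim g - 1 \<and> wft (h g) \<and> tg (h g) \<subseteq> G)"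

lemma tg_dim: "g \<in> tg t \<Longrightarrow> gdim g \<le> tdim t"
  by (induction t) auto

lemma occ_dim: "g \<in> occ k t \<Longrightarrow> gdim g = k"
  by (induction t) (auto split: if_splits)

lemma occ_tg: "occ k t \<subseteq> tg t"
  by (induction t) auto

lemma occ_empty: "tdim t < k \<Longrightarrow> occ k t = {}"
  by (induction t) auto

lemma cls_nonneg: "cls k t h \<ge> 0"
  by (induction t) auto

lemma supp_cls: "supp (cls k t) = occ k t"
proof (induction t)
  case (Comp p y x)
  have "supp (cls k (Comp p y x)) = supp (cls k y) \<union> supp (cls k x)"
    using cls_nonneg[of k y] cls_nonneg[of k x] unfolding supp_def
    by (auto simp: add_nonneg_eq_0_iff)
  then show ?case using Comp by simp
qed (auto simp: supp_def)

lemma srcF_triv: "tdim t \<le> i \<Longrightarrow> srcF h n i t = t"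
  by (cases n; cases t) auto

lemma tgtF_triv: "tdim t \<le> i \<Longrightarrow> tgtF h n i t = t"
  by (cases n; cases t) auto

lemma srcF_fuel:
  assumes w: "wfp G h"
  shows "tg t \<subseteq> G \<Longrightarrow> tdim t \<le> n \<Longrightarrow> srcF h (Suc n) i t = srcF h n i t"
proof (induction n arbitrary: t)
  case 0
  then show ?case by (simp add: srcF_triv)
next
  case (Suc n)
  show ?case using Suc.prems
  proof (induction t)
    case (Gen g)
    show ?case
    proof (cases "gdim g \<le> i")
      case False
      then have "tdim (h g) < gdim g" "tg (h g) \<subseteq> G" using w Gen by (auto simp: wfp_def)
      then show ?thesis using Suc.IH[of "h g"] Gen False by simp
    qed simp
  qed auto
qed

lemma tgtF_fuel:
  assumes w: "wfp G h"
  shows "tg t \<subseteq> G \<Longrightarrow> tdim t \<le> n \<Longrightarrow> tgtF h (Suc n) i t = tgtF h n i t"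
proof (induction n arbitrary: t)
  case 0
  then show ?case by (simp add: tgtF_triv)
next
  case (Suc n)
  show ?case using Suc.prems
  proof (induction t)
    case (Gen g)
    show ?case
    proof (cases "gdim g \<le> i")
      case False
      then have "tdim (h g) < gdim g" "tg (h g) \<subseteq> G" using w Gen by (auto simp: wfp_def)
      then show ?thesis using Suc.IH[of "h g"] Gen False by simp
    qed simp
  qed auto
qed

lemma srcF_src:
  assumes w: "wfp G h" and "tg t \<subseteq> G" "tdim t \<le> n"
  shows "srcF h n i t = src h i t"
  using assms(3)
proof (induction n rule: dec_induct)
  case base then show ?case by (simp add: src_def)
next
  case (step n) then show ?case using srcF_fuel[OF w assms(2)] by simp
qed

lemma tgtF_tgt:
  assumes w: "wfp G h" and "tg t \<subseteq> G" "tdim t \<le> n"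
  shows "tgtF h n i t = tgt h i t"
  using assms(3)
proof (induction n rule: dec_induct)
  case base then show ?case by (simp add: tgt_def)
next
  case (step n) then show ?case using tgtF_fuel[OF w assms(2)] by simp
qed

lemma srcF_props:
  assumes w: "wfp G h"
  shows "tg t \<subseteq> G \<Longrightarrow> wft t \<Longrightarrow> tdim t \<le> n \<Longrightarrow>
    tdim (srcF h n i t) = min i (tdim t) \<and> wft (srcF h n i t) \<and> tg (srcF h n i t) \<subseteq> G"
proof (induction n arbitrary: t)
  case 0
  then show ?case by simp
next
  case (Suc n)
  show ?case using Suc.prems
  proof (induction t)
    case (Gen g)
    show ?case
    proof (cases "gdim g \<le> i")
      case False
      then have "tdim (h g) = gdim g - 1" "wft (h g)" "tg (h g) \<subseteq> G" using w Gen by (auto simp: wfp_def)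
      then show ?thesis using Suc.IH[of "h g"] Gen False by simp
    qed (use Gen in simp)
  next
    case (Comp p y x)
    have hy: "tdim (srcF h (Suc n) i y) = min i (tdim y) \<and> wft (srcF h (Suc n) i y) \<and> tg (srcF h (Suc n) i y) \<subseteq> G"
      using Comp.IH(1) Comp.prems by auto
    have hx: "tdim (srcF h (Suc n) i x) = min i (tdim x) \<and> wft (srcF h (Suc n) i x) \<and> tg (srcF h (Suc n) i x) \<subseteq> G"
      using Comp.IH(2) Comp.prems by auto
    show ?case using hy hx Comp.prems by (auto simp: min_def max_def)
  qed (auto simp: min_def max_def)
qed

lemma tgtF_props:
  assumes w: "wfp G h"
  shows "tg t \<subseteq> G \<Longrightarrow> wft t \<Longrightarrow> tdim t \<le> n \<Longrightarrow>
    tdim (tgtF h n i t) = min i (tdim t) \<and> wft (tgtF h n i t) \<and> tg (tgtF h n i t) \<subseteq> G"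
proof (induction n arbitrary: t)
  case 0
  then show ?case by simp
next
  case (Suc n)
  show ?case using Suc.prems
  proof (induction t)
    case (Gen g)
    show ?case
    proof (cases "gdim g \<le> i")
      case False
      then have "tdim (h g) = gdim g - 1" "wft (h g)" "tg (h g) \<subseteq> G" using w Gen by (auto simp: wfp_def)
      then show ?thesis using Suc.IH[of "h g"] Gen False by simp
    qed (use Gen in simp)
  next
    case (Comp p y x)
    have hy: "tdim (tgtF h (Suc n) i y) = min i (tdim y) \<and> wft (tgtF h (Suc n) i y) \<and> tg (tgtF h (Suc n) i y) \<subseteq> G"
      using Comp.IH(1) Comp.prems by auto
    have hx: "tdim (tgtF h (Suc n) i x) = min i (tdim x) \<and> wft (tgtF h (Suc n) i x) \<and> tg (tgtF h (Suc n) i x) \<subseteq> G"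
      using Comp.IH(2) Comp.prems by auto
    show ?case using hy hx Comp.prems by (auto simp: min_def max_def)
  qed (auto simp: min_def max_def)
qed

lemma src_props:
  assumes "wfp G h" "tg t \<subseteq> G" "wft t"
  shows "tdim (src h i t) = min i (tdim t)" "wft (src h i t)" "tg (src h i t) \<subseteq> G"
  using srcF_props[OF assms, of "tdim t" i] by (auto simp: src_def)

lemma tgt_props:
  assumes "wfp G h" "tg t \<subseteq> G" "wft t"
  shows "tdim (tgt h i t) = min i (tdim t)" "wft (tgt h i t)" "tg (tgt h i t) \<subseteq> G"
  using tgtF_props[OF assms, of "tdim t" i] by (auto simp: tgt_def)

lemma src_triv: "tdim t \<le> i \<Longrightarrow> src h i t = t"
  by (simp add: src_def srcF_triv)

lemma tgt_triv: "tdim t \<le> i \<Longrightarrow> tgt h i t = t"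
  by (simp add: tgt_def tgtF_triv)

lemma src_Gen:
  assumes "wfp G h" "g \<in> G"
  shows "src h i (Gen g) = (if gdim g \<le> i then Gen g else src h i (h g))"
proof (cases "gdim g \<le> i")
  case False
  then obtain n where n: "gdim g = Suc n" by (cases "gdim g") auto
  have "tdim (h g) < gdim g" "tg (h g) \<subseteq> G" using assms False by (auto simp: wfp_def)
  then show ?thesis using False n srcF_src[OF assms(1), of "h g" n i] by (simp add: src_def)
qed (simp add: src_triv)

lemma tgt_Gen:
  assumes "wfp G h" "g \<in> G"
  shows "tgt h i (Gen g) = (if gdim g \<le> i then Gen g else tgt h i (h g))"
proof (cases "gdim g \<le> i")
  case False
  then obtain n where n: "gdim g = Suc n" by (cases "gdim g") auto
  have "tdim (h g) < gdim g" "tg (h g) \<subseteq> G" using assms False by (auto simp: wfp_def)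
  then show ?thesis using False n tgtF_tgt[OF assms(1), of "h g" n i] by (simp add: tgt_def)
qed (simp add: tgt_triv)

lemma src_Id:
  assumes "wfp G h" "tg u \<subseteq> G"
  shows "src h i (tm.Id u) = (if tdim (tm.Id u) \<le> i then tm.Id u else src h i u)"
  using srcF_src[OF assms, of "tdim (tm.Id u)" i] by (simp add: src_def)

lemma tgt_Id:
  assumes "wfp G h" "tg u \<subseteq> G"
  shows "tgt h i (tm.Id u) = (if tdim (tm.Id u) \<le> i then tm.Id u else tgt h i u)"
  using tgtF_tgt[OF assms, of "tdim (tm.Id u)" i] by (simp add: tgt_def)

lemma src_Comp:
  assumes "wfp G h" "tg y \<subseteq> G" "tg x \<subseteq> G"
  shows "src h i (Comp p y x) = (if tdim (Comp p y x) \<le> i then Comp p y x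
      else if i \<le> p then src h i x else Comp p (src h i y) (src h i x))"
proof (cases "tdim (Comp p y x) \<le> i")
  case False
  then obtain n where n: "tdim (Comp p y x) = Suc n" by (cases "tdim (Comp p y x)") auto
  have "tdim x \<le> Suc n" "tdim y \<le> Suc n" using n by auto
  then show ?thesis using False n srcF_src[OF assms(1,2), of "Suc n" i] srcF_src[OF assms(1,3), of "Suc n" i]
    by (simp add: src_def del: tdim.simps)
qed (simp add: src_triv)

lemma tgt_Comp:
  assumes "wfp G h" "tg y \<subseteq> G" "tg x \<subseteq> G"
  shows "tgt h i (Comp p y x) = (if tdim (Comp p y x) \<le> i then Comp p y x
      else if i \<le> p then tgt h i y else Comp p (tgt h i y) (tgt h i x))"
proof (cases "tdim (Comp p y x) \<le> i")
  case False
  then obtain n where n: "tdim (Comp p y x) = Suc n" by (cases "tdim (Comp p y x)") auto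
  have "tdim x \<le> Suc n" "tdim y \<le> Suc n" using n by auto
  then show ?thesis using False n tgtF_tgt[OF assms(1,2), of "Suc n" i] tgtF_tgt[OF assms(1,3), of "Suc n" i]
    by (simp add: tgt_def del: tdim.simps)
qed (simp add: tgt_triv)


lemma tdim_eta[simp]: "tdim (etaT t) = tdim t"
  by (induction t) auto

lemma wft_eta[simp]: "wft (etaT t) = wft t"
  by (induction t) auto

lemma tg_eta[simp]: "tg (etaT t) = Eta ` tg t"
  by (induction t) auto

lemma occ_eta[simp]: "occ k (etaT t) = Eta ` occ k t"
  by (induction t) auto

lemma srcF_eta:
  "(\<forall>a. h' (Eta a) = etaT (h a)) \<Longrightarrow> srcF h' n i (etaT t) = etaT (srcF h n i t)"
  by (induction h n i t rule: srcF.induct) auto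

lemma tgtF_eta:
  "(\<forall>a. h' (Eta a) = etaT (h a)) \<Longrightarrow> tgtF h' n i (etaT t) = etaT (tgtF h n i t)"
  by (induction h n i t rule: tgtF.induct) auto

lemma src_eta:
  "(\<forall>a. h' (Eta a) = etaT (h a)) \<Longrightarrow> src h' i (etaT t) = etaT (src h i t)"
  by (simp add: src_def srcF_eta)

lemma tgt_eta:
  "(\<forall>a. h' (Eta a) = etaT (h a)) \<Longrightarrow> tgt h' i (etaT t) = etaT (tgt h i t)"
  by (simp add: tgt_def tgtF_eta)

lemma fold_Cons: "foldl (\<lambda>acc j. Comp j acc (h j)) a (j # js) = foldl (\<lambda>acc j. Comp j acc (h j)) (Comp j a (h j)) js"
  by simp

lemma tg_fold: "tg (foldl (\<lambda>acc j. Comp j acc (h j)) a js) = tg a \<union> (\<Union>j\<in>set js. tg (h j))"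
  by (induction js arbitrary: a) auto

lemma occ_fold: "occ k (foldl (\<lambda>acc j. Comp j acc (h j)) a js) = occ k a \<union> (\<Union>j\<in>set js. occ k (h j))"
  by (induction js arbitrary: a) auto

lemma tdim_fold: "(\<forall>j\<in>set js. tdim (h j) \<le> tdim a) \<Longrightarrow>
   tdim (foldl (\<lambda>acc j. Comp j acc (h j)) a js) = tdim a"
  by (induction js arbitrary: a) auto

lemma wft_fold: "wft a \<Longrightarrow> (\<forall>j\<in>set js. wft (h j) \<and> j < tdim (h j) \<and> j < tdim a) \<Longrightarrow>
   wft (foldl (\<lambda>acc j. Comp j acc (h j)) a js)"
proof (induction js arbitrary: a)
  case (Cons j js)
  have "wft (Comp j a (h j))" using Cons.prems by auto
  moreover have "\<forall>j'\<in>set js. wft (h j') \<and> j' < tdim (h j') \<and> j' < tdim (Comp j a (h j))"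
    using Cons.prems by auto
  ultimately show ?case using Cons.IH by simp
qed simp

lemma tgt_fold:
  assumes w: "wfp G h'" and "tg a \<subseteq> G" "\<forall>j\<in>set js. tg (h j) \<subseteq> G \<and> j < tdim (h j)"
  shows "occ k (tgt h' i (foldl (\<lambda>acc j. Comp j acc (h j)) a js)) \<subseteq>
     occ k (tgt h' i a) \<union> (\<Union>j\<in>{j\<in>set js. j < i}. occ k (tgt h' i (h j)))"
  using assms(2,3)
proof (induction js arbitrary: a)
  case (Cons j js)
  have c: "occ k (tgt h' i (Comp j a (h j))) \<subseteq> occ k (tgt h' i a) \<union> (if j < i then occ k (tgt h' i (h j)) else {})"
  proof -
    have hj: "tg (h j) \<subseteq> G" "j < tdim (h j)" using Cons.prems by auto
    show ?thesis
      using tgt_Comp[OF w Cons.prems(1) hj(1), of i j] hj(2) tgt_triv[of a i h'] tgt_triv[of "h j" i h']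
      by (auto split: if_splits)
  qed
  have "occ k (tgt h' i (foldl (\<lambda>acc j. Comp j acc (h j)) (Comp j a (h j)) js)) \<subseteq>
     occ k (tgt h' i (Comp j a (h j))) \<union> (\<Union>j\<in>{j\<in>set js. j < i}. occ k (tgt h' i (h j)))"
    using Cons.IH[of "Comp j a (h j)"] Cons.prems by auto
  then show ?case using c by (auto split: if_splits)
qed simp


abbreviation Gp :: "gen set \<Rightarrow> gen set" where
  "Gp G \<equiv> insert Orig (Eta ` G \<union> XiEta ` G)"

lemma xi_props:
  "wfp G gs \<Longrightarrow> wfp G gt \<Longrightarrow> tg u \<subseteq> G \<Longrightarrow> wft u \<Longrightarrow> tdim u < f \<Longrightarrow>
   tdim (xiS gs gt f u) = Suc (tdim u) \<and> wft (xiS gs gt f u) \<and> tg (xiS gs gt f u) \<subseteq> Gp G"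
proof (induction gs gt f u rule: xiS.induct)
  case (4 gs gt f p y x)
  define F where "F = foldl (\<lambda>acc j. Comp j acc (xiS gs gt f (src gs j x))) (etaT (tgt gt (Suc p) y)) [0..<p]"
  have pr: "tg y \<subseteq> G" "tg x \<subseteq> G" "wft y" "wft x" "p < tdim y" "p < tdim x" "tdim y \<le> f" "tdim x \<le> f"
    using "4.prems" by auto
  have inner: "tdim (xiS gs gt f (src gs j x)) = Suc j \<and> wft (xiS gs gt f (src gs j x)) \<and> tg (xiS gs gt f (src gs j x)) \<subseteq> Gp G"
    if "j < p" for j
  proof -
    have "tdim (src gs j x) = j" "wft (src gs j x)" "tg (src gs j x) \<subseteq> G"
      using src_props[OF "4.prems"(1) pr(2,4), of j] that pr by auto
    then show ?thesis using "4.IH"(1)[of j] "4.prems"(1,2) that pr by auto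
  qed
  have a: "tdim (etaT (tgt gt (Suc p) y)) = Suc p" "wft (etaT (tgt gt (Suc p) y))"
     "tg (etaT (tgt gt (Suc p) y)) \<subseteq> Gp G"
    using tgt_props[OF "4.prems"(2) pr(1,3), of "Suc p"] pr by auto
  have F: "tdim F = Suc p" "wft F" "tg F \<subseteq> Gp G"
    unfolding F_def
      apply (subst tdim_fold) using inner a apply auto[2]
     apply (rule wft_fold) using inner a apply auto[2]
    apply (subst tg_fold) apply (intro Un_least UN_least) using inner a by auto
  have ix: "tdim (xiS gs gt (Suc f) x) = Suc (tdim x) \<and> wft (xiS gs gt (Suc f) x) \<and> tg (xiS gs gt (Suc f) x) \<subseteq> Gp G"
    using "4.IH"(2) "4.prems"(1,2) pr by auto
  have iy: "tdim (xiS gs gt (Suc f) y) = Suc (tdim y) \<and> wft (xiS gs gt (Suc f) y) \<and> tg (xiS gs gt (Suc f) y) \<subseteq> Gp G"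
    using "4.IH"(3) "4.prems"(1,2) pr by auto
  have e: "xiS gs gt (Suc f) (Comp p y x) = Comp (Suc p) (Comp p F (xiS gs gt (Suc f) x)) (xiS gs gt (Suc f) y)"
    by (simp add: F_def)
  show ?case unfolding e using F ix iy pr by (auto simp: max_def)
qed auto

lemma gens_T: "gens (Tstep P) = Gp (gens P)"
  by (simp add: Tstep_def gens_def Let_def)

lemma gs_T_Eta: "gsrc (Tstep P) (Eta a) = etaT (gsrc P a)"
  by (simp add: Tstep_def gsrc_def Let_def)

lemma gt_T_Eta: "gtgt (Tstep P) (Eta a) = etaT (gtgt P a)"
  by (simp add: Tstep_def gtgt_def Let_def)

lemma gs_T_Xi: "gsrc (Tstep P) (XiEta a) =
   (if gdim a = 0 then Gen Orig else xiT (gsrc P) (gtgt P) (gtgt P a))"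
  by (simp add: Tstep_def gsrc_def gtgt_def Let_def)

lemma gt_T_Xi: "gtgt (Tstep P) (XiEta a) =
   foldl (\<lambda>acc j. Comp j acc (xiT (gsrc P) (gtgt P) (src (gsrc P) j (Gen a)))) (Gen (Eta a)) [0..<gdim a]"
  by (simp add: Tstep_def gsrc_def gtgt_def Let_def)

lemma xiT_props:
  "wfp G gs \<Longrightarrow> wfp G gt \<Longrightarrow> tg u \<subseteq> G \<Longrightarrow> wft u \<Longrightarrow>
   tdim (xiT gs gt u) = Suc (tdim u) \<and> wft (xiT gs gt u) \<and> tg (xiT gs gt u) \<subseteq> Gp G"
  unfolding xiT_def by (rule xi_props) auto

lemma gtXi_props:
  assumes "wfp G gs" "wfp G gt" "a \<in> G"
  shows "tdim (foldl (\<lambda>acc j. Comp j acc (xiT gs gt (src gs j (Gen a)))) (Gen (Eta a)) [0..<gdim a]) = gdim a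
    \<and> wft (foldl (\<lambda>acc j. Comp j acc (xiT gs gt (src gs j (Gen a)))) (Gen (Eta a)) [0..<gdim a])
    \<and> tg (foldl (\<lambda>acc j. Comp j acc (xiT gs gt (src gs j (Gen a)))) (Gen (Eta a)) [0..<gdim a]) \<subseteq> Gp G"
proof -
  have inner: "tdim (xiT gs gt (src gs j (Gen a))) = Suc j \<and> wft (xiT gs gt (src gs j (Gen a)))
     \<and> tg (xiT gs gt (src gs j (Gen a))) \<subseteq> Gp G" if "j < gdim a" for j
  proof -
    have "tdim (src gs j (Gen a)) = j" "wft (src gs j (Gen a))" "tg (src gs j (Gen a)) \<subseteq> G"
      using src_props[OF assms(1), of "Gen a" j] assms(3) that by auto
    then show ?thesis using xiT_props[OF assms(1,2)] by auto
  qed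
  show ?thesis
    apply (intro conjI)
      apply (subst tdim_fold) using inner apply auto[2]
     apply (rule wft_fold) using inner apply auto[2]
    apply (subst tg_fold) apply (intro Un_least UN_least) using inner assms(3) by auto
qed

lemma wfp_T:
  assumes "wfp (gens P) (gsrc P)" "wfp (gens P) (gtgt P)"
  shows "wfp (gens (Tstep P)) (gsrc (Tstep P))" "wfp (gens (Tstep P)) (gtgt (Tstep P))"
proof -
  have "\<forall>g\<in>gens (Tstep P). 0 < gdim g \<longrightarrow> tdim (gsrc (Tstep P) g) = gdim g - 1 \<and> wft (gsrc (Tstep P) g) \<and> tg (gsrc (Tstep P) g) \<subseteq> gens (Tstep P)"
  proof (intro ballI impI)
    fix g assume g: "g \<in> gens (Tstep P)" "0 < gdim g"
    show "tdim (gsrc (Tstep P) g) = gdim g - 1 \<and> wft (gsrc (Tstep P) g) \<and> tg (gsrc (Tstep P) g) \<subseteq> gens (Tstep P)"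
    proof (cases g)
      case (Eta a)
      then show ?thesis using g assms(1) unfolding gens_T wfp_def by (auto simp: gs_T_Eta)
    next
      case (XiEta a)
      show ?thesis
      proof (cases "gdim a = 0")
        case False
        have "tdim (gtgt P a) = gdim a - 1" "wft (gtgt P a)" "tg (gtgt P a) \<subseteq> gens P"
          using assms(2) g XiEta False unfolding wfp_def gens_T by auto
        then show ?thesis using XiEta False xiT_props[OF assms, of "gtgt P a"] unfolding gens_T by (simp add: gs_T_Xi)
      qed (simp add: XiEta gs_T_Xi gens_T)
    qed (use g in auto)
  qed
  then show "wfp (gens (Tstep P)) (gsrc (Tstep P))" unfolding wfp_def by blast
  have "\<forall>g\<in>gens (Tstep P). 0 < gdim g \<longrightarrow> tdim (gtgt (Tstep P) g) = gdim g - 1 \<and> wft (gtgt (Tstep P) g) \<and> tg (gtgt (Tstep P) g) \<subseteq> gens (Tstep P)"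
  proof (intro ballI impI)
    fix g assume g: "g \<in> gens (Tstep P)" "0 < gdim g"
    show "tdim (gtgt (Tstep P) g) = gdim g - 1 \<and> wft (gtgt (Tstep P) g) \<and> tg (gtgt (Tstep P) g) \<subseteq> gens (Tstep P)"
    proof (cases g)
      case (Eta a)
      then show ?thesis using g assms(2) unfolding gens_T wfp_def by (auto simp: gt_T_Eta)
    next
      case (XiEta a)
      then have "a \<in> gens P" using g unfolding gens_T by auto
      then show ?thesis using XiEta gtXi_props[OF assms] unfolding gens_T by (simp add: gt_T_Xi)
    qed (use g in auto)
  qed
  then show "wfp (gens (Tstep P)) (gtgt (Tstep P))" unfolding wfp_def by blast
qed


lemma occ_src_Comp:
  assumes "wfp G h" "tg y \<subseteq> G" "tg x \<subseteq> G"
  shows "occ k (src h i (Comp p y x)) \<subseteq> occ k (src h i y) \<union> occ k (src h i x)"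
  using src_Comp[OF assms, of i p] src_triv[of y i h] src_triv[of x i h]
  by (auto split: if_splits)

lemma xi_top:
  "wfp G gs \<Longrightarrow> wfp G gt \<Longrightarrow> tg u \<subseteq> G \<Longrightarrow> wft u \<Longrightarrow> tdim u \<le> m \<Longrightarrow>
   occ (Suc m) (xiS gs gt f u) \<subseteq> XiEta ` occ m u"
proof (induction gs gt f u rule: xiS.induct)
  case (1 gs gt u)
  then show ?case using occ_empty[of u "Suc m"] by simp
next
  case (4 gs gt f p y x)
  have pr: "tg y \<subseteq> G" "tg x \<subseteq> G" "wft y" "wft x" "p < tdim y" "p < tdim x" "tdim y \<le> m" "tdim x \<le> m"
    using "4.prems" by auto
  have inner: "occ (Suc m) (xiS gs gt f (src gs j x)) \<subseteq> XiEta ` occ m x" if "j < p" for j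
  proof -
    have s: "tdim (src gs j x) = min j (tdim x)" "wft (src gs j x)" "tg (src gs j x) \<subseteq> G"
      using src_props[OF "4.prems"(1) pr(2,4), of j] by auto
    have "occ (Suc m) (xiS gs gt f (src gs j x)) \<subseteq> XiEta ` occ m (src gs j x)"
      using "4.IH"(1)[of j] "4.prems"(1,2) s that pr by auto
    moreover have "occ m (src gs j x) \<subseteq> occ m x"
    proof (cases "tdim (src gs j x) < m")
      case True then show ?thesis using occ_empty by simp
    next
      case False
      then have "tdim x \<le> j" using s pr by (auto simp: min_def split: if_splits)
      then show ?thesis using src_triv by simp
    qed
    ultimately show ?thesis by blast
  qed
  have a: "occ (Suc m) (etaT (tgt gt (Suc p) y)) = {}"
    using tgt_props[OF "4.prems"(2) pr(1,3), of "Suc p"] pr occ_empty[of "tgt gt (Suc p) y" "Suc m"] by auto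
  show ?case
    using a "4.IH"(2,3) "4.prems"(1,2) pr apply (auto simp: occ_fold)
    using inner by blast
qed auto

context
  fixes P :: polygraph
  assumes ws: "wfp (gens P) (gsrc P)" and wt: "wfp (gens P) (gtgt P)"
begin

lemma wsT: "wfp (gens (Tstep P)) (gsrc (Tstep P))" using wfp_T[OF ws wt] by simp
lemma wtT: "wfp (gens (Tstep P)) (gtgt (Tstep P))" using wfp_T[OF ws wt] by simp

lemma src_side_gen:
  "\<forall>u f i. tg u \<subseteq> gens P \<longrightarrow> wft u \<longrightarrow> tdim u < f \<longrightarrow> tdim u \<le> N \<longrightarrow>
    occ i (src (gsrc (Tstep P)) i (xiS (gsrc P) (gtgt P) f u)) \<subseteq>
      insert Orig (XiEta ` occ (i - 1) (tgt (gtgt P) (i - 1) u))"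
proof (induction N rule: less_induct)
  case (less N)
  show ?case
  proof (intro allI impI)
    fix u f i
    assume "tg u \<subseteq> gens P" "wft u" "tdim u < f" "tdim u \<le> N"
    then show "occ i (src (gsrc (Tstep P)) i (xiS (gsrc P) (gtgt P) f u)) \<subseteq>
      insert Orig (XiEta ` occ (i - 1) (tgt (gtgt P) (i - 1) u))"
    proof (induction u arbitrary: i)
      case (Gen b)
      obtain f' where f: "f = Suc f'" using Gen.prems by (cases f) auto
      have bG: "b \<in> gens P" using Gen.prems by simp
      have bG': "XiEta b \<in> gens (Tstep P)" using bG by (simp add: gens_T)
      show ?case
      proof (cases "Suc (gdim b) \<le> i")
        case True
        then show ?thesis using src_Gen[OF wsT bG', of i] tgt_triv[of "Gen b" "i - 1"] by (auto simp: f)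
      next
        case False
        note src_Gen[OF wsT bG', of i]
        show ?thesis
        proof (cases "gdim b = 0")
          case True
          then show ?thesis using False src_Gen[OF wsT bG', of i] src_triv[of "Gen Orig" i]
            by (simp add: f gs_T_Xi)
        next
          case b0: False
          have gtb: "tdim (gtgt P b) = gdim b - 1" "wft (gtgt P b)" "tg (gtgt P b) \<subseteq> gens P"
            using wt bG b0 by (auto simp: wfp_def)
          have lt: "gdim b - 1 < N" using Gen.prems b0 by simp
          have IH: "occ i (src (gsrc (Tstep P)) i (xiS (gsrc P) (gtgt P) (Suc (tdim (gtgt P b))) (gtgt P b))) \<subseteq>
              insert Orig (XiEta ` occ (i - 1) (tgt (gtgt P) (i - 1) (gtgt P b)))"
            using less.IH[OF lt] gtb by auto
          have "tgt (gtgt P) (i - 1) (Gen b) = tgt (gtgt P) (i - 1) (gtgt P b)"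
            using tgt_Gen[OF wt bG, of "i - 1"] False b0 by auto
          then show ?thesis using IH False src_Gen[OF wsT bG', of i] b0
            by (simp add: f gs_T_Xi xiT_def)
        qed
      qed
    next
      case (Id w)
      obtain f' where f: "f = Suc f'" using Id.prems by (cases f) auto
      have xw: "tdim (xiS (gsrc P) (gtgt P) f w) = Suc (tdim w)" "tg (xiS (gsrc P) (gtgt P) f w) \<subseteq> gens (Tstep P)"
        using xi_props[OF ws wt, of w f] Id.prems by (auto simp: gens_T)
      have e: "xiS (gsrc P) (gtgt P) f (tm.Id w) = tm.Id (xiS (gsrc P) (gtgt P) f w)" by (simp add: f)
      show ?case
      proof (cases "Suc (Suc (tdim w)) \<le> i")
        case True
        then show ?thesis unfolding e using src_Id[OF wsT xw(2), of i] xw by simp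
      next
        case False
        have "tgt (gtgt P) (i - 1) (tm.Id w) = tgt (gtgt P) (i - 1) w"
          using tgt_Id[OF wt, of w "i - 1"] Id.prems False by auto
        then show ?thesis unfolding e using src_Id[OF wsT xw(2), of i] xw False Id.IH[of i] Id.prems by auto
      qed
    next
      case (Comp p y x)
      obtain f' where f: "f = Suc f'" using Comp.prems by (cases f) auto
      have pr: "tg y \<subseteq> gens P" "tg x \<subseteq> gens P" "wft y" "wft x" "p < tdim y" "p < tdim x"
        "tdim y < f" "tdim x < f" "tdim y \<le> N" "tdim x \<le> N"
        using Comp.prems by auto
      define F where "F = foldl (\<lambda>acc j. Comp j acc (xiS (gsrc P) (gtgt P) f' (src (gsrc P) j x))) (etaT (tgt (gtgt P) (Suc p) y)) [0..<p]"
      define X where "X = xiS (gsrc P) (gtgt P) f x"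
      define Y where "Y = xiS (gsrc P) (gtgt P) f y"
      have e: "xiS (gsrc P) (gtgt P) f (Comp p y x) = Comp (Suc p) (Comp p F X) Y"
        by (simp add: f F_def X_def Y_def)
      have full: "tdim (xiS (gsrc P) (gtgt P) f (Comp p y x)) = Suc (tdim (Comp p y x))"
        "tg (xiS (gsrc P) (gtgt P) f (Comp p y x)) \<subseteq> gens (Tstep P)"
        using xi_props[OF ws wt, of "Comp p y x" f] Comp.prems by (auto simp: gens_T)
      have X: "tdim X = Suc (tdim x)" "tg X \<subseteq> gens (Tstep P)"
        using xi_props[OF ws wt, of x f] pr by (auto simp: gens_T X_def)
      have Y: "tdim Y = Suc (tdim y)" "tg Y \<subseteq> gens (Tstep P)"
        using xi_props[OF ws wt, of y f] pr by (auto simp: gens_T Y_def)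
      have tgF: "tg F \<subseteq> gens (Tstep P)" using full unfolding e by simp
      have dF: "tdim F \<le> Suc p"
      proof -
        have "tdim (Comp (Suc p) (Comp p F X) Y) = Suc (max (tdim y) (tdim x))" using full e by simp
        have inner: "tdim (xiS (gsrc P) (gtgt P) f' (src (gsrc P) j x)) \<le> Suc p" if "j < p" for j
        proof -
          have "tdim (src (gsrc P) j x) = j" "wft (src (gsrc P) j x)" "tg (src (gsrc P) j x) \<subseteq> gens P"
            using src_props[OF ws pr(2,4), of j] that pr by auto
          moreover have "j < f'" using that pr f by auto
          ultimately show ?thesis using xi_props[OF ws wt, of "src (gsrc P) j x" f'] that by auto
        qed
        have "tdim (etaT (tgt (gtgt P) (Suc p) y)) = Suc p"
          using tgt_props[OF wt pr(1,3), of "Suc p"] pr by auto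
        then show ?thesis unfolding F_def using inner by (subst tdim_fold) auto
      qed
      show ?case
      proof (cases "Suc (tdim (Comp p y x)) \<le> i")
        case True
        then obtain m where m: "i = Suc m" "tdim (Comp p y x) \<le> m" by (cases i) auto
        have "occ i (src (gsrc (Tstep P)) i (xiS (gsrc P) (gtgt P) f (Comp p y x))) =
              occ (Suc m) (xiS (gsrc P) (gtgt P) f (Comp p y x))"
          using src_triv[of "xiS (gsrc P) (gtgt P) f (Comp p y x)" i] full True m by simp
        also have "\<dots> \<subseteq> XiEta ` occ m (Comp p y x)"
          by (rule xi_top[OF ws wt]) (use Comp.prems m in auto)
        finally show ?thesis using tgt_triv[of "Comp p y x" m] m by auto
      next
        case False
        show ?thesis
        proof (cases "i \<le> Suc p")
          case True
          have "src (gsrc (Tstep P)) i (Comp (Suc p) (Comp p F X) Y) = src (gsrc (Tstep P)) i Y"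
            using src_Comp[OF wsT _ Y(2), of "Comp p F X" i "Suc p"] tgF X True False full e by auto
          moreover have "tgt (gtgt P) (i - 1) (Comp p y x) = tgt (gtgt P) (i - 1) y"
            using tgt_Comp[OF wt pr(1,2), of "i - 1" p] True False pr by auto
          ultimately show ?thesis unfolding e Y_def using Comp.IH(1)[of i] pr by simp
        next
          case i2: False
          have s1: "occ i (src (gsrc (Tstep P)) i (Comp (Suc p) (Comp p F X) Y)) \<subseteq>
             occ i (src (gsrc (Tstep P)) i (Comp p F X)) \<union> occ i (src (gsrc (Tstep P)) i Y)"
            by (rule occ_src_Comp[OF wsT]) (use tgF X Y in auto)
          have s2: "occ i (src (gsrc (Tstep P)) i (Comp p F X)) \<subseteq>
             occ i (src (gsrc (Tstep P)) i F) \<union> occ i (src (gsrc (Tstep P)) i X)"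
            by (rule occ_src_Comp[OF wsT]) (use tgF X Y in auto)
          have s3: "occ i (src (gsrc (Tstep P)) i F) = {}"
            using src_triv[of F i] dF i2 occ_empty[of F i] by auto
          have t: "tgt (gtgt P) (i - 1) (Comp p y x) = Comp p (tgt (gtgt P) (i - 1) y) (tgt (gtgt P) (i - 1) x)"
            using tgt_Comp[OF wt pr(1,2), of "i - 1" p] i2 False pr by auto
          have s4: "occ i (src (gsrc (Tstep P)) i (Comp (Suc p) (Comp p F X) Y)) \<subseteq>
             occ i (src (gsrc (Tstep P)) i X) \<union> occ i (src (gsrc (Tstep P)) i Y)"
            using s1 s2 s3 by blast
          have i1: "occ i (src (gsrc (Tstep P)) i X) \<subseteq> insert Orig (XiEta ` occ (i - 1) (tgt (gtgt P) (i - 1) x))"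
            using Comp.IH(2)[of i] pr unfolding X_def by auto
          have i2: "occ i (src (gsrc (Tstep P)) i Y) \<subseteq> insert Orig (XiEta ` occ (i - 1) (tgt (gtgt P) (i - 1) y))"
            using Comp.IH(1)[of i] pr unfolding Y_def by auto
          show ?thesis unfolding e t using s4 i1 i2 by auto
        qed
      qed
    qed
  qed
qed

end


context
  fixes P :: polygraph
  assumes ws: "wfp (gens P) (gsrc P)" and wt: "wfp (gens P) (gtgt P)"
begin

lemma src_side:
  assumes a: "a \<in> gens P" and i: "i \<le> gdim a"
  shows "occ i (src (gsrc (Tstep P)) i (Gen (XiEta a))) \<subseteq>
      insert Orig (XiEta ` occ (i - 1) (tgt (gtgt P) (i - 1) (Gen a)))"
proof -
  have aG': "XiEta a \<in> gens (Tstep P)" using a by (simp add: gens_T)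
  have e: "src (gsrc (Tstep P)) i (Gen (XiEta a)) = src (gsrc (Tstep P)) i (gsrc (Tstep P) (XiEta a))"
    using src_Gen[OF wsT[OF ws wt] aG', of i] i by simp
  show ?thesis
  proof (cases "gdim a = 0")
    case True
    then show ?thesis unfolding e using src_triv[of "Gen Orig" i] by (simp add: gs_T_Xi)
  next
    case False
    have gta: "tdim (gtgt P a) = gdim a - 1" "wft (gtgt P a)" "tg (gtgt P a) \<subseteq> gens P"
      using wt a False by (auto simp: wfp_def)
    have "tgt (gtgt P) (i - 1) (Gen a) = tgt (gtgt P) (i - 1) (gtgt P a)"
      using tgt_Gen[OF wt a, of "i - 1"] False i by auto
    then show ?thesis unfolding e using src_side_gen[OF ws wt, of "tdim (gtgt P a)"] gta False
      by (simp add: gs_T_Xi xiT_def)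
  qed
qed

lemma tgt_side:
  assumes a: "a \<in> gens P" and i: "i \<le> gdim a"
  shows "occ i (tgt (gtgt (Tstep P)) i (Gen (XiEta a))) \<subseteq>
      range Eta \<union> XiEta ` occ (i - 1) (src (gsrc P) (i - 1) (Gen a))"
proof -
  let ?h = "\<lambda>j. xiT (gsrc P) (gtgt P) (src (gsrc P) j (Gen a))"
  have aG': "XiEta a \<in> gens (Tstep P)" using a by (simp add: gens_T)
  have e: "tgt (gtgt (Tstep P)) i (Gen (XiEta a)) =
     tgt (gtgt (Tstep P)) i (foldl (\<lambda>acc j. Comp j acc (?h j)) (Gen (Eta a)) [0..<gdim a])"
    using tgt_Gen[OF wtT[OF ws wt] aG', of i] i by (simp add: gt_T_Xi)
  have hj: "tdim (?h j) = Suc j \<and> tg (?h j) \<subseteq> gens (Tstep P)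
      \<and> tdim (src (gsrc P) j (Gen a)) = j \<and> wft (src (gsrc P) j (Gen a)) \<and> tg (src (gsrc P) j (Gen a)) \<subseteq> gens P"
    if "j < gdim a" for j
  proof -
    have "tdim (src (gsrc P) j (Gen a)) = j" "wft (src (gsrc P) j (Gen a))" "tg (src (gsrc P) j (Gen a)) \<subseteq> gens P"
      using src_props[OF ws, of "Gen a" j] a that by auto
    then show ?thesis using xiT_props[OF ws wt, of "src (gsrc P) j (Gen a)"] by (auto simp: gens_T)
  qed
  have f: "occ i (tgt (gtgt (Tstep P)) i (foldl (\<lambda>acc j. Comp j acc (?h j)) (Gen (Eta a)) [0..<gdim a])) \<subseteq>
     occ i (tgt (gtgt (Tstep P)) i (Gen (Eta a))) \<union> (\<Union>j\<in>{j\<in>set [0..<gdim a]. j < i}. occ i (tgt (gtgt (Tstep P)) i (?h j)))"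
    by (rule tgt_fold[OF wtT[OF ws wt]]) (use a hj in \<open>auto simp: gens_T\<close>)
  have b1: "occ i (tgt (gtgt (Tstep P)) i (Gen (Eta a))) \<subseteq> range Eta"
  proof -
    have "tgt (gtgt (Tstep P)) i (etaT (Gen a)) = etaT (tgt (gtgt P) i (Gen a))"
      by (rule tgt_eta) (simp add: gt_T_Eta)
    then show ?thesis by auto
  qed
  have b2: "occ i (tgt (gtgt (Tstep P)) i (?h j)) \<subseteq> XiEta ` occ (i - 1) (src (gsrc P) (i - 1) (Gen a))"
    if "j < gdim a" "j < i" for j
  proof -
    have t: "tgt (gtgt (Tstep P)) i (?h j) = ?h j" using tgt_triv[of "?h j" i] hj[OF that(1)] that by simp
    show ?thesis
    proof (cases "Suc j = i")
      case True
      have "occ (Suc j) (?h j) \<subseteq> XiEta ` occ j (src (gsrc P) j (Gen a))"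
        unfolding xiT_def by (rule xi_top[OF ws wt]) (use hj[OF that(1)] in auto)
      then show ?thesis using t True by auto
    next
      case False
      then show ?thesis using t occ_empty[of "?h j" i] hj[OF that(1)] that by auto
    qed
  qed
  show ?thesis unfolding e using f b1 b2 by fastforce
qed

lemma atomic_T:
  assumes at: "atomic P"
  shows "atomic (Tstep P)"
  unfolding atomic_def supp_cls
proof (intro ballI allI impI)
  fix x i assume x: "x \<in> gens (Tstep P)" and i: "i < gdim x"
  show "occ i (src (gsrc (Tstep P)) i (Gen x)) \<inter> occ i (tgt (gtgt (Tstep P)) i (Gen x)) = {}"
  proof (cases x)
    case Orig
    then show ?thesis using i by simp
  next
    case (Eta a)
    have aP: "a \<in> gens P" using x Eta by (auto simp: gens_T)
    have s: "src (gsrc (Tstep P)) i (etaT (Gen a)) = etaT (src (gsrc P) i (Gen a))"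
      by (rule src_eta) (simp add: gs_T_Eta)
    have t: "tgt (gtgt (Tstep P)) i (etaT (Gen a)) = etaT (tgt (gtgt P) i (Gen a))"
      by (rule tgt_eta) (simp add: gt_T_Eta)
    have d: "occ i (src (gsrc P) i (Gen a)) \<inter> occ i (tgt (gtgt P) i (Gen a)) = {}"
      using at aP i Eta unfolding atomic_def supp_cls by simp
    show ?thesis using s t d Eta by (auto simp: image_Int[symmetric])
  next
    case (XiEta a)
    have aP: "a \<in> gens P" using x XiEta by (auto simp: gens_T)
    have ia: "i \<le> gdim a" using i XiEta by simp
    show ?thesis
    proof (rule ccontr)
      assume "occ i (src (gsrc (Tstep P)) i (Gen x)) \<inter> occ i (tgt (gtgt (Tstep P)) i (Gen x)) \<noteq> {}"
      then obtain g where g1: "g \<in> occ i (src (gsrc (Tstep P)) i (Gen (XiEta a)))"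
          and g2: "g \<in> occ i (tgt (gtgt (Tstep P)) i (Gen (XiEta a)))" using XiEta by blast
      have s: "g \<in> insert Orig (XiEta ` occ (i - 1) (tgt (gtgt P) (i - 1) (Gen a)))"
        using src_side[OF aP ia] g1 by blast
      have t: "g \<in> range Eta \<union> XiEta ` occ (i - 1) (src (gsrc P) (i - 1) (Gen a))"
        using tgt_side[OF aP ia] g2 by blast
      from s t obtain b where b: "g = XiEta b" "b \<in> occ (i - 1) (tgt (gtgt P) (i - 1) (Gen a))"
        "b \<in> occ (i - 1) (src (gsrc P) (i - 1) (Gen a))" by auto
      have "gdim g = i" using occ_dim g1 by blast
      then have "i - 1 < gdim a" using b ia by simp
      then show False using at aP b unfolding atomic_def supp_cls by blast
    qed
  qed
qed

end

lemma all_steps: "wfp (gens ((Tstep ^^ m) empty_polygraph)) (gsrc ((Tstep ^^ m) empty_polygraph)) \<and>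
   wfp (gens ((Tstep ^^ m) empty_polygraph)) (gtgt ((Tstep ^^ m) empty_polygraph)) \<and>
   atomic ((Tstep ^^ m) empty_polygraph)"
proof (induction m)
  case 0
  then show ?case by (simp add: wfp_def atomic_def empty_polygraph_def gens_def)
next
  case (Suc m)
  then show ?case using wfp_T atomic_T by simp
qed

theorem mainTheorem12:
  fixes n :: int
  assumes "n \<ge> -1"
  shows "atomic (O_polygraph n)"
  using all_steps[of "nat (n + 1)"] by (simp add: O_polygraph_def)

end
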